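(* The graph $T_6$ is a minimal non-word-representable graph: $T_6$ is not word-representable, but every graph obtained from $T_6$ by deleting one vertex is word-representable.
   Context: A graph $G=(V,E)$ is word-representable if there exists a word $w$ over the alphabet $V$ such that for all distinct $x,y\in V$, the letters $x$ and $y$ alternate in $w$ if and only if $xy\in E$ (alternation meaning that deleting all letters other than $x$ and $y$ leaves $xyxy\cdots$ or $yxyx\cdots$). The graph $T_6$ has vertex set $\{1,\dots,9\}$; the vertices $1,2,3,4,5$ form a clique, the vertices $6,7,8,9$ form an independent set, and the remaining edges are: $6$ is adjacent to $1,2,3$; $7$ is adjacent to $1,2$; $8$ is adjacent to $1,4$; $9$ is adjacent to $2,5$. *)

theory Defs
  imports Main
begin

definition alternate :: "'a list \<Rightarrow> 'a \<Rightarrow> 'a \<Rightarrow> bool" where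
  "alternate w x y \<longleftrightarrow>
     (let u = filter (\<lambda>z. z = x \<or> z = y) w in
        \<forall>i. Suc i < length u \<longrightarrow> u ! i \<noteq> u ! Suc i)"

text \<open>A (simple) graph is given by a vertex set V and a symmetric adjacency
  relation E; only pairs of vertices of V are considered, so the graph with
  vertex set V' \<subseteq> V and relation E is the induced subgraph on V'.\<close>
definition word_representable :: "'a set \<Rightarrow> ('a \<Rightarrow> 'a \<Rightarrow> bool) \<Rightarrow> bool" where
  "word_representable V E \<longleftrightarrow>
     (\<exists>w. set w = V \<and>
        (\<forall>x\<in>V. \<forall>y\<in>V. x \<noteq> y \<longrightarrow> (alternate w x y \<longleftrightarrow> E x y)))"

definition T6_V :: "nat set" where
  "T6_V = {1..9}"

definition T6_edges :: "(nat \<times> nat) set" where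
  "T6_edges = {(x, y). x \<in> {1..5} \<and> y \<in> {1..5} \<and> x \<noteq> y}
     \<union> {(6,1), (6,2), (6,3), (7,1), (7,2), (8,1), (8,4), (9,2), (9,5)}"

definition T6_E :: "nat \<Rightarrow> nat \<Rightarrow> bool" where
  "T6_E x y \<longleftrightarrow> (x, y) \<in> T6_edges \<or> (y, x) \<in> T6_edges"

end

theory Submission
  imports Defs
begin

definition cnt :: "'a \<Rightarrow> 'a list \<Rightarrow> int" where
  "cnt x p = int (length (filter (\<lambda>z. z = x) p))"

definition PCw :: "'a \<Rightarrow> 'a \<Rightarrow> 'a list \<Rightarrow> bool" where
  "PCw x y w \<longleftrightarrow> (\<forall>p s. w = p @ s \<longrightarrow> 0 \<le> cnt x p - cnt y p \<and> cnt x p - cnt y p \<le> 1)"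

fun altx :: "'a \<Rightarrow> 'a \<Rightarrow> 'a list \<Rightarrow> bool" where
  "altx x y [] = True"
| "altx x y (z # u) = (z = x \<and> altx y x u)"

fun nc :: "'a list \<Rightarrow> bool" where
  "nc [] = True"
| "nc [a] = True"
| "nc (a # b # u) = (a \<noteq> b \<and> nc (b # u))"

lemma nc_iff: "(\<forall>i. Suc i < length u \<longrightarrow> u ! i \<noteq> u ! Suc i) \<longleftrightarrow> nc u"
proof (induction u rule: nc.induct)
  case (3 a b u)
  show ?case
  proof
    assume H: "\<forall>i. Suc i < length (a # b # u) \<longrightarrow> (a # b # u) ! i \<noteq> (a # b # u) ! Suc i"
    have "a \<noteq> b" using H[rule_format, of 0] by simp
    moreover have "\<forall>i. Suc i < length (b # u) \<longrightarrow> (b # u) ! i \<noteq> (b # u) ! Suc i"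
      using H by (metis Suc_less_eq length_Cons nth_Cons_Suc)
    ultimately show "nc (a # b # u)" using 3 by simp
  next
    assume H: "nc (a # b # u)"
    show "\<forall>i. Suc i < length (a # b # u) \<longrightarrow> (a # b # u) ! i \<noteq> (a # b # u) ! Suc i"
    proof (intro allI impI)
      fix i assume i: "Suc i < length (a # b # u)"
      show "(a # b # u) ! i \<noteq> (a # b # u) ! Suc i"
      proof (cases i)
        case 0 then show ?thesis using H by simp
      next
        case (Suc j) then show ?thesis using H 3 i by simp
      qed
    qed
  qed
qed auto

lemma nc_altx: "x \<noteq> y \<Longrightarrow> set u \<subseteq> {x, y} \<Longrightarrow> nc u \<longleftrightarrow> altx x y u \<or> altx y x u"
proof (induction u arbitrary: x y rule: nc.induct)
  case (3 a b u)
  then show ?case by (cases u) auto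
qed auto

lemma prefix_Cons: "(\<forall>p s. z # w = p @ s \<longrightarrow> Q p) \<longleftrightarrow> Q [] \<and> (\<forall>p s. w = p @ s \<longrightarrow> Q (z # p))"
  by (auto simp: Cons_eq_append_conv)

lemma PCw_Nil: "PCw x y []" by (simp add: PCw_def cnt_def)

lemma PCw_Cons: "x \<noteq> y \<Longrightarrow> PCw x y (z # w) \<longleftrightarrow>
   (if z = x then PCw y x w else if z = y then False else PCw x y w)"
proof -
  assume xy: "x \<noteq> y"
  show ?thesis
  proof (cases "z = y")
    case True
    have "z # w = [z] @ w" by simp
    moreover have "\<not> (0 \<le> cnt x [z] - cnt y [z])" using True xy by (simp add: cnt_def)
    ultimately have "\<not> PCw x y (z # w)" unfolding PCw_def by blast
    then show ?thesis using True xy by simp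
  next
    case False
    then show ?thesis using xy unfolding PCw_def prefix_Cons by (auto simp: cnt_def)
  qed
qed

lemma altx_PCw: "x \<noteq> y \<Longrightarrow> altx x y (filter (\<lambda>z. z = x \<or> z = y) w) \<longleftrightarrow> PCw x y w"
proof (induction w arbitrary: x y)
  case Nil then show ?case by (simp add: PCw_Nil)
next
  case (Cons z w)
  have e: "filter (\<lambda>z. z = y \<or> z = x) w = filter (\<lambda>z. z = x \<or> z = y) w"
    by (metis (no_types, lifting) filter_cong)
  show ?case using Cons.IH[of x y] Cons.IH[of y x] Cons.prems e
    by (auto simp: PCw_Cons)
qed

lemma alt_char: "x \<noteq> y \<Longrightarrow> alternate w x y \<longleftrightarrow> PCw x y w \<or> PCw y x w"
proof -
  assume xy: "x \<noteq> y"
  let ?u = "filter (\<lambda>z. z = x \<or> z = y) w"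
  have e: "filter (\<lambda>z. z = y \<or> z = x) w = ?u"
    by (metis (no_types, lifting) filter_cong)
  have "alternate w x y \<longleftrightarrow> nc ?u" unfolding alternate_def Let_def nc_iff ..
  also have "\<dots> \<longleftrightarrow> altx x y ?u \<or> altx y x ?u" by (rule nc_altx) (use xy in auto)
  also have "\<dots> \<longleftrightarrow> PCw x y w \<or> PCw y x w"
    using altx_PCw[OF xy, of w] altx_PCw[of y x w] xy e by auto
  finally show ?thesis .
qed

lemma alt_nc: "alternate w x y \<longleftrightarrow> nc (filter (\<lambda>z. z = x \<or> z = y) w)"
  unfolding alternate_def Let_def nc_iff ..

lemma PCw_anti: "x \<noteq> y \<Longrightarrow> x \<in> set w \<Longrightarrow> PCw x y w \<Longrightarrow> PCw y x w \<Longrightarrow> False"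
proof -
  assume xy: "x \<noteq> y" and "x \<in> set w" and A: "PCw x y w" and B: "PCw y x w"
  then obtain p s where w: "w = p @ x # s" by (meson split_list)
  have "0 \<le> cnt x p - cnt y p" "0 \<le> cnt y p - cnt x p" using A B w unfolding PCw_def by blast+
  then have 1: "cnt x p = cnt y p" by linarith
  have "w = (p @ [x]) @ s" using w by simp
  then have "cnt y (p @ [x]) - cnt x (p @ [x]) \<ge> 0" using B unfolding PCw_def by blast
  then show False using 1 xy by (simp add: cnt_def)
qed

lemma PCw_trans3: "PCw a b w \<Longrightarrow> PCw b c w \<Longrightarrow> PCw c a w \<Longrightarrow> PCw a b w \<and> PCw b a w"
  unfolding PCw_def
proof (intro conjI allI impI)
  fix p s assume A: "\<forall>p s. w = p @ s \<longrightarrow> 0 \<le> cnt a p - cnt b p \<and> cnt a p - cnt b p \<le> 1"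
    and B: "\<forall>p s. w = p @ s \<longrightarrow> 0 \<le> cnt b p - cnt c p \<and> cnt b p - cnt c p \<le> 1"
    and C: "\<forall>p s. w = p @ s \<longrightarrow> 0 \<le> cnt c p - cnt a p \<and> cnt c p - cnt a p \<le> 1"
  { assume "w = p @ s"
    then have "0 \<le> cnt a p - cnt b p \<and> cnt a p - cnt b p \<le> 1" "0 \<le> cnt b p - cnt c p \<and> cnt b p - cnt c p \<le> 1"
      "0 \<le> cnt c p - cnt a p \<and> cnt c p - cnt a p \<le> 1" using A B C by blast+
    then have "cnt a p = cnt b p" by linarith }
  note * = this
  show "w = p @ s \<Longrightarrow> 0 \<le> cnt a p - cnt b p" using * by simp
  show "w = p @ s \<Longrightarrow> cnt a p - cnt b p \<le> 1" using * by simp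
  show "w = p @ s \<Longrightarrow> 0 \<le> cnt b p - cnt a p" using * by simp
  show "w = p @ s \<Longrightarrow> cnt b p - cnt a p \<le> 1" using * by simp
qed

lemma PCw_four: "PCw a b w \<Longrightarrow> PCw b c w \<Longrightarrow> PCw c d w \<Longrightarrow> PCw a d w \<Longrightarrow> PCw a c w \<and> PCw b d w"
  unfolding PCw_def
proof (intro conjI allI impI)
  fix p s assume A: "\<forall>p s. w = p @ s \<longrightarrow> 0 \<le> cnt a p - cnt b p \<and> cnt a p - cnt b p \<le> 1"
    and B: "\<forall>p s. w = p @ s \<longrightarrow> 0 \<le> cnt b p - cnt c p \<and> cnt b p - cnt c p \<le> 1"
    and C: "\<forall>p s. w = p @ s \<longrightarrow> 0 \<le> cnt c p - cnt d p \<and> cnt c p - cnt d p \<le> 1"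
    and D: "\<forall>p s. w = p @ s \<longrightarrow> 0 \<le> cnt a p - cnt d p \<and> cnt a p - cnt d p \<le> 1"
    and "w = p @ s"
  then have "0 \<le> cnt a p - cnt b p \<and> cnt a p - cnt b p \<le> 1" "0 \<le> cnt b p - cnt c p \<and> cnt b p - cnt c p \<le> 1"
      "0 \<le> cnt c p - cnt d p \<and> cnt c p - cnt d p \<le> 1" "0 \<le> cnt a p - cnt d p \<and> cnt a p - cnt d p \<le> 1" by blast+
  then show "0 \<le> cnt a p - cnt c p" "cnt a p - cnt c p \<le> 1" "0 \<le> cnt b p - cnt d p" "cnt b p - cnt d p \<le> 1"
    by linarith+
qed

lemma comb:
  fixes R :: "nat \<Rightarrow> nat \<Rightarrow> bool"
  assumes tour: "\<And>x y. T6_E x y \<Longrightarrow> R x y \<or> R y x"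
  and anti: "\<And>x y. T6_E x y \<Longrightarrow> R x y \<Longrightarrow> \<not> R y x"
  and tri: "\<And>a b c. T6_E a b \<Longrightarrow> T6_E b c \<Longrightarrow> T6_E a c \<Longrightarrow> R a b \<Longrightarrow> R b c \<Longrightarrow> R a c"
  and four: "\<And>a b c d. T6_E a b \<Longrightarrow> T6_E b c \<Longrightarrow> T6_E c d \<Longrightarrow> T6_E a d \<Longrightarrow> a \<noteq> c \<Longrightarrow> b \<noteq> d
     \<Longrightarrow> R a b \<Longrightarrow> R b c \<Longrightarrow> R c d \<Longrightarrow> R a d \<Longrightarrow> T6_E a c \<and> T6_E b d"
  shows False
proof -
  have t1: "R 1 2 \<or> R 2 1" using tour[of 1 2] by (auto simp add: T6_E_def T6_edges_def)
  have t2: "\<not> R 1 2 \<or> \<not> R 2 1" using anti[of 1 2] by (auto simp add: T6_E_def T6_edges_def)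
  have t3: "R 1 3 \<or> R 3 1" using tour[of 1 3] by (auto simp add: T6_E_def T6_edges_def)
  have t4: "\<not> R 1 3 \<or> \<not> R 3 1" using anti[of 1 3] by (auto simp add: T6_E_def T6_edges_def)
  have t5: "R 1 4 \<or> R 4 1" using tour[of 1 4] by (auto simp add: T6_E_def T6_edges_def)
  have t6: "\<not> R 1 4 \<or> \<not> R 4 1" using anti[of 1 4] by (auto simp add: T6_E_def T6_edges_def)
  have t7: "R 1 5 \<or> R 5 1" using tour[of 1 5] by (auto simp add: T6_E_def T6_edges_def)
  have t8: "\<not> R 1 5 \<or> \<not> R 5 1" using anti[of 1 5] by (auto simp add: T6_E_def T6_edges_def)
  have t9: "R 1 6 \<or> R 6 1" using tour[of 1 6] by (auto simp add: T6_E_def T6_edges_def)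
  have t10: "\<not> R 1 6 \<or> \<not> R 6 1" using anti[of 1 6] by (auto simp add: T6_E_def T6_edges_def)
  have t11: "R 1 7 \<or> R 7 1" using tour[of 1 7] by (auto simp add: T6_E_def T6_edges_def)
  have t12: "\<not> R 1 7 \<or> \<not> R 7 1" using anti[of 1 7] by (auto simp add: T6_E_def T6_edges_def)
  have t13: "R 1 8 \<or> R 8 1" using tour[of 1 8] by (auto simp add: T6_E_def T6_edges_def)
  have t14: "\<not> R 1 8 \<or> \<not> R 8 1" using anti[of 1 8] by (auto simp add: T6_E_def T6_edges_def)
  have t15: "R 2 3 \<or> R 3 2" using tour[of 2 3] by (auto simp add: T6_E_def T6_edges_def)
  have t16: "\<not> R 2 3 \<or> \<not> R 3 2" using anti[of 2 3] by (auto simp add: T6_E_def T6_edges_def)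
  have t17: "R 2 4 \<or> R 4 2" using tour[of 2 4] by (auto simp add: T6_E_def T6_edges_def)
  have t18: "\<not> R 2 4 \<or> \<not> R 4 2" using anti[of 2 4] by (auto simp add: T6_E_def T6_edges_def)
  have t19: "R 2 5 \<or> R 5 2" using tour[of 2 5] by (auto simp add: T6_E_def T6_edges_def)
  have t20: "\<not> R 2 5 \<or> \<not> R 5 2" using anti[of 2 5] by (auto simp add: T6_E_def T6_edges_def)
  have t21: "R 2 6 \<or> R 6 2" using tour[of 2 6] by (auto simp add: T6_E_def T6_edges_def)
  have t22: "\<not> R 2 6 \<or> \<not> R 6 2" using anti[of 2 6] by (auto simp add: T6_E_def T6_edges_def)
  have t23: "R 2 7 \<or> R 7 2" using tour[of 2 7] by (auto simp add: T6_E_def T6_edges_def)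
  have t24: "\<not> R 2 7 \<or> \<not> R 7 2" using anti[of 2 7] by (auto simp add: T6_E_def T6_edges_def)
  have t25: "R 2 9 \<or> R 9 2" using tour[of 2 9] by (auto simp add: T6_E_def T6_edges_def)
  have t26: "\<not> R 2 9 \<or> \<not> R 9 2" using anti[of 2 9] by (auto simp add: T6_E_def T6_edges_def)
  have t27: "R 3 4 \<or> R 4 3" using tour[of 3 4] by (auto simp add: T6_E_def T6_edges_def)
  have t28: "\<not> R 3 4 \<or> \<not> R 4 3" using anti[of 3 4] by (auto simp add: T6_E_def T6_edges_def)
  have t29: "R 3 5 \<or> R 5 3" using tour[of 3 5] by (auto simp add: T6_E_def T6_edges_def)
  have t30: "\<not> R 3 5 \<or> \<not> R 5 3" using anti[of 3 5] by (auto simp add: T6_E_def T6_edges_def)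
  have t31: "R 3 6 \<or> R 6 3" using tour[of 3 6] by (auto simp add: T6_E_def T6_edges_def)
  have t32: "\<not> R 3 6 \<or> \<not> R 6 3" using anti[of 3 6] by (auto simp add: T6_E_def T6_edges_def)
  have t33: "R 4 5 \<or> R 5 4" using tour[of 4 5] by (auto simp add: T6_E_def T6_edges_def)
  have t34: "\<not> R 4 5 \<or> \<not> R 5 4" using anti[of 4 5] by (auto simp add: T6_E_def T6_edges_def)
  have t35: "R 4 8 \<or> R 8 4" using tour[of 4 8] by (auto simp add: T6_E_def T6_edges_def)
  have t36: "\<not> R 4 8 \<or> \<not> R 8 4" using anti[of 4 8] by (auto simp add: T6_E_def T6_edges_def)
  have t37: "R 5 9 \<or> R 9 5" using tour[of 5 9] by (auto simp add: T6_E_def T6_edges_def)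
  have t38: "\<not> R 5 9 \<or> \<not> R 9 5" using anti[of 5 9] by (auto simp add: T6_E_def T6_edges_def)
  have t39: "\<not> R 1 2 \<or> \<not> R 2 3 \<or> R 1 3" using tri[of 1 2 3] by (auto simp add: T6_E_def T6_edges_def)
  have t40: "\<not> R 1 2 \<or> \<not> R 2 4 \<or> R 1 4" using tri[of 1 2 4] by (auto simp add: T6_E_def T6_edges_def)
  have t41: "\<not> R 1 2 \<or> \<not> R 2 5 \<or> R 1 5" using tri[of 1 2 5] by (auto simp add: T6_E_def T6_edges_def)
  have t42: "\<not> R 1 2 \<or> \<not> R 2 6 \<or> R 1 6" using tri[of 1 2 6] by (auto simp add: T6_E_def T6_edges_def)
  have t43: "\<not> R 1 2 \<or> \<not> R 2 7 \<or> R 1 7" using tri[of 1 2 7] by (auto simp add: T6_E_def T6_edges_def)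
  have t44: "\<not> R 1 3 \<or> \<not> R 3 2 \<or> R 1 2" using tri[of 1 3 2] by (auto simp add: T6_E_def T6_edges_def)
  have t45: "\<not> R 1 3 \<or> \<not> R 3 4 \<or> R 1 4" using tri[of 1 3 4] by (auto simp add: T6_E_def T6_edges_def)
  have t46: "\<not> R 1 3 \<or> \<not> R 3 5 \<or> R 1 5" using tri[of 1 3 5] by (auto simp add: T6_E_def T6_edges_def)
  have t47: "\<not> R 1 3 \<or> \<not> R 3 6 \<or> R 1 6" using tri[of 1 3 6] by (auto simp add: T6_E_def T6_edges_def)
  have t48: "\<not> R 1 4 \<or> \<not> R 4 2 \<or> R 1 2" using tri[of 1 4 2] by (auto simp add: T6_E_def T6_edges_def)
  have t49: "\<not> R 1 4 \<or> \<not> R 4 3 \<or> R 1 3" using tri[of 1 4 3] by (auto simp add: T6_E_def T6_edges_def)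
  have t50: "\<not> R 1 4 \<or> \<not> R 4 5 \<or> R 1 5" using tri[of 1 4 5] by (auto simp add: T6_E_def T6_edges_def)
  have t51: "\<not> R 1 4 \<or> \<not> R 4 8 \<or> R 1 8" using tri[of 1 4 8] by (auto simp add: T6_E_def T6_edges_def)
  have t52: "\<not> R 1 5 \<or> \<not> R 5 2 \<or> R 1 2" using tri[of 1 5 2] by (auto simp add: T6_E_def T6_edges_def)
  have t53: "\<not> R 1 5 \<or> \<not> R 5 3 \<or> R 1 3" using tri[of 1 5 3] by (auto simp add: T6_E_def T6_edges_def)
  have t54: "\<not> R 1 5 \<or> \<not> R 5 4 \<or> R 1 4" using tri[of 1 5 4] by (auto simp add: T6_E_def T6_edges_def)
  have t55: "\<not> R 1 6 \<or> \<not> R 6 2 \<or> R 1 2" using tri[of 1 6 2] by (auto simp add: T6_E_def T6_edges_def)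
  have t56: "\<not> R 1 6 \<or> \<not> R 6 3 \<or> R 1 3" using tri[of 1 6 3] by (auto simp add: T6_E_def T6_edges_def)
  have t57: "\<not> R 1 7 \<or> \<not> R 7 2 \<or> R 1 2" using tri[of 1 7 2] by (auto simp add: T6_E_def T6_edges_def)
  have t58: "\<not> R 1 8 \<or> \<not> R 8 4 \<or> R 1 4" using tri[of 1 8 4] by (auto simp add: T6_E_def T6_edges_def)
  have t59: "\<not> R 2 1 \<or> \<not> R 1 3 \<or> R 2 3" using tri[of 2 1 3] by (auto simp add: T6_E_def T6_edges_def)
  have t60: "\<not> R 2 1 \<or> \<not> R 1 4 \<or> R 2 4" using tri[of 2 1 4] by (auto simp add: T6_E_def T6_edges_def)
  have t61: "\<not> R 2 1 \<or> \<not> R 1 5 \<or> R 2 5" using tri[of 2 1 5] by (auto simp add: T6_E_def T6_edges_def)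
  have t62: "\<not> R 2 1 \<or> \<not> R 1 6 \<or> R 2 6" using tri[of 2 1 6] by (auto simp add: T6_E_def T6_edges_def)
  have t63: "\<not> R 2 1 \<or> \<not> R 1 7 \<or> R 2 7" using tri[of 2 1 7] by (auto simp add: T6_E_def T6_edges_def)
  have t64: "\<not> R 2 3 \<or> \<not> R 3 1 \<or> R 2 1" using tri[of 2 3 1] by (auto simp add: T6_E_def T6_edges_def)
  have t65: "\<not> R 2 3 \<or> \<not> R 3 4 \<or> R 2 4" using tri[of 2 3 4] by (auto simp add: T6_E_def T6_edges_def)
  have t66: "\<not> R 2 3 \<or> \<not> R 3 5 \<or> R 2 5" using tri[of 2 3 5] by (auto simp add: T6_E_def T6_edges_def)
  have t67: "\<not> R 2 3 \<or> \<not> R 3 6 \<or> R 2 6" using tri[of 2 3 6] by (auto simp add: T6_E_def T6_edges_def)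
  have t68: "\<not> R 2 4 \<or> \<not> R 4 1 \<or> R 2 1" using tri[of 2 4 1] by (auto simp add: T6_E_def T6_edges_def)
  have t69: "\<not> R 2 4 \<or> \<not> R 4 3 \<or> R 2 3" using tri[of 2 4 3] by (auto simp add: T6_E_def T6_edges_def)
  have t70: "\<not> R 2 4 \<or> \<not> R 4 5 \<or> R 2 5" using tri[of 2 4 5] by (auto simp add: T6_E_def T6_edges_def)
  have t71: "\<not> R 2 5 \<or> \<not> R 5 1 \<or> R 2 1" using tri[of 2 5 1] by (auto simp add: T6_E_def T6_edges_def)
  have t72: "\<not> R 2 5 \<or> \<not> R 5 3 \<or> R 2 3" using tri[of 2 5 3] by (auto simp add: T6_E_def T6_edges_def)
  have t73: "\<not> R 2 5 \<or> \<not> R 5 4 \<or> R 2 4" using tri[of 2 5 4] by (auto simp add: T6_E_def T6_edges_def)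
  have t74: "\<not> R 2 5 \<or> \<not> R 5 9 \<or> R 2 9" using tri[of 2 5 9] by (auto simp add: T6_E_def T6_edges_def)
  have t75: "\<not> R 2 6 \<or> \<not> R 6 1 \<or> R 2 1" using tri[of 2 6 1] by (auto simp add: T6_E_def T6_edges_def)
  have t76: "\<not> R 2 6 \<or> \<not> R 6 3 \<or> R 2 3" using tri[of 2 6 3] by (auto simp add: T6_E_def T6_edges_def)
  have t77: "\<not> R 2 7 \<or> \<not> R 7 1 \<or> R 2 1" using tri[of 2 7 1] by (auto simp add: T6_E_def T6_edges_def)
  have t78: "\<not> R 2 9 \<or> \<not> R 9 5 \<or> R 2 5" using tri[of 2 9 5] by (auto simp add: T6_E_def T6_edges_def)
  have t79: "\<not> R 3 1 \<or> \<not> R 1 2 \<or> R 3 2" using tri[of 3 1 2] by (auto simp add: T6_E_def T6_edges_def)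
  have t80: "\<not> R 3 1 \<or> \<not> R 1 4 \<or> R 3 4" using tri[of 3 1 4] by (auto simp add: T6_E_def T6_edges_def)
  have t81: "\<not> R 3 1 \<or> \<not> R 1 5 \<or> R 3 5" using tri[of 3 1 5] by (auto simp add: T6_E_def T6_edges_def)
  have t82: "\<not> R 3 1 \<or> \<not> R 1 6 \<or> R 3 6" using tri[of 3 1 6] by (auto simp add: T6_E_def T6_edges_def)
  have t83: "\<not> R 3 2 \<or> \<not> R 2 1 \<or> R 3 1" using tri[of 3 2 1] by (auto simp add: T6_E_def T6_edges_def)
  have t84: "\<not> R 3 2 \<or> \<not> R 2 4 \<or> R 3 4" using tri[of 3 2 4] by (auto simp add: T6_E_def T6_edges_def)
  have t85: "\<not> R 3 2 \<or> \<not> R 2 5 \<or> R 3 5" using tri[of 3 2 5] by (auto simp add: T6_E_def T6_edges_def)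
  have t86: "\<not> R 3 2 \<or> \<not> R 2 6 \<or> R 3 6" using tri[of 3 2 6] by (auto simp add: T6_E_def T6_edges_def)
  have t87: "\<not> R 3 4 \<or> \<not> R 4 1 \<or> R 3 1" using tri[of 3 4 1] by (auto simp add: T6_E_def T6_edges_def)
  have t88: "\<not> R 3 4 \<or> \<not> R 4 2 \<or> R 3 2" using tri[of 3 4 2] by (auto simp add: T6_E_def T6_edges_def)
  have t89: "\<not> R 3 4 \<or> \<not> R 4 5 \<or> R 3 5" using tri[of 3 4 5] by (auto simp add: T6_E_def T6_edges_def)
  have t90: "\<not> R 3 5 \<or> \<not> R 5 1 \<or> R 3 1" using tri[of 3 5 1] by (auto simp add: T6_E_def T6_edges_def)
  have t91: "\<not> R 3 5 \<or> \<not> R 5 2 \<or> R 3 2" using tri[of 3 5 2] by (auto simp add: T6_E_def T6_edges_def)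
  have t92: "\<not> R 3 5 \<or> \<not> R 5 4 \<or> R 3 4" using tri[of 3 5 4] by (auto simp add: T6_E_def T6_edges_def)
  have t93: "\<not> R 3 6 \<or> \<not> R 6 1 \<or> R 3 1" using tri[of 3 6 1] by (auto simp add: T6_E_def T6_edges_def)
  have t94: "\<not> R 3 6 \<or> \<not> R 6 2 \<or> R 3 2" using tri[of 3 6 2] by (auto simp add: T6_E_def T6_edges_def)
  have t95: "\<not> R 4 1 \<or> \<not> R 1 2 \<or> R 4 2" using tri[of 4 1 2] by (auto simp add: T6_E_def T6_edges_def)
  have t96: "\<not> R 4 1 \<or> \<not> R 1 3 \<or> R 4 3" using tri[of 4 1 3] by (auto simp add: T6_E_def T6_edges_def)
  have t97: "\<not> R 4 1 \<or> \<not> R 1 5 \<or> R 4 5" using tri[of 4 1 5] by (auto simp add: T6_E_def T6_edges_def)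
  have t98: "\<not> R 4 1 \<or> \<not> R 1 8 \<or> R 4 8" using tri[of 4 1 8] by (auto simp add: T6_E_def T6_edges_def)
  have t99: "\<not> R 4 2 \<or> \<not> R 2 1 \<or> R 4 1" using tri[of 4 2 1] by (auto simp add: T6_E_def T6_edges_def)
  have t100: "\<not> R 4 2 \<or> \<not> R 2 3 \<or> R 4 3" using tri[of 4 2 3] by (auto simp add: T6_E_def T6_edges_def)
  have t101: "\<not> R 4 2 \<or> \<not> R 2 5 \<or> R 4 5" using tri[of 4 2 5] by (auto simp add: T6_E_def T6_edges_def)
  have t102: "\<not> R 4 3 \<or> \<not> R 3 1 \<or> R 4 1" using tri[of 4 3 1] by (auto simp add: T6_E_def T6_edges_def)
  have t103: "\<not> R 4 3 \<or> \<not> R 3 2 \<or> R 4 2" using tri[of 4 3 2] by (auto simp add: T6_E_def T6_edges_def)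
  have t104: "\<not> R 4 3 \<or> \<not> R 3 5 \<or> R 4 5" using tri[of 4 3 5] by (auto simp add: T6_E_def T6_edges_def)
  have t105: "\<not> R 4 5 \<or> \<not> R 5 1 \<or> R 4 1" using tri[of 4 5 1] by (auto simp add: T6_E_def T6_edges_def)
  have t106: "\<not> R 4 5 \<or> \<not> R 5 2 \<or> R 4 2" using tri[of 4 5 2] by (auto simp add: T6_E_def T6_edges_def)
  have t107: "\<not> R 4 5 \<or> \<not> R 5 3 \<or> R 4 3" using tri[of 4 5 3] by (auto simp add: T6_E_def T6_edges_def)
  have t108: "\<not> R 4 8 \<or> \<not> R 8 1 \<or> R 4 1" using tri[of 4 8 1] by (auto simp add: T6_E_def T6_edges_def)
  have t109: "\<not> R 5 1 \<or> \<not> R 1 2 \<or> R 5 2" using tri[of 5 1 2] by (auto simp add: T6_E_def T6_edges_def)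
  have t110: "\<not> R 5 1 \<or> \<not> R 1 3 \<or> R 5 3" using tri[of 5 1 3] by (auto simp add: T6_E_def T6_edges_def)
  have t111: "\<not> R 5 1 \<or> \<not> R 1 4 \<or> R 5 4" using tri[of 5 1 4] by (auto simp add: T6_E_def T6_edges_def)
  have t112: "\<not> R 5 2 \<or> \<not> R 2 1 \<or> R 5 1" using tri[of 5 2 1] by (auto simp add: T6_E_def T6_edges_def)
  have t113: "\<not> R 5 2 \<or> \<not> R 2 3 \<or> R 5 3" using tri[of 5 2 3] by (auto simp add: T6_E_def T6_edges_def)
  have t114: "\<not> R 5 2 \<or> \<not> R 2 4 \<or> R 5 4" using tri[of 5 2 4] by (auto simp add: T6_E_def T6_edges_def)
  have t115: "\<not> R 5 2 \<or> \<not> R 2 9 \<or> R 5 9" using tri[of 5 2 9] by (auto simp add: T6_E_def T6_edges_def)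
  have t116: "\<not> R 5 3 \<or> \<not> R 3 1 \<or> R 5 1" using tri[of 5 3 1] by (auto simp add: T6_E_def T6_edges_def)
  have t117: "\<not> R 5 3 \<or> \<not> R 3 2 \<or> R 5 2" using tri[of 5 3 2] by (auto simp add: T6_E_def T6_edges_def)
  have t118: "\<not> R 5 3 \<or> \<not> R 3 4 \<or> R 5 4" using tri[of 5 3 4] by (auto simp add: T6_E_def T6_edges_def)
  have t119: "\<not> R 5 4 \<or> \<not> R 4 1 \<or> R 5 1" using tri[of 5 4 1] by (auto simp add: T6_E_def T6_edges_def)
  have t120: "\<not> R 5 4 \<or> \<not> R 4 2 \<or> R 5 2" using tri[of 5 4 2] by (auto simp add: T6_E_def T6_edges_def)
  have t121: "\<not> R 5 4 \<or> \<not> R 4 3 \<or> R 5 3" using tri[of 5 4 3] by (auto simp add: T6_E_def T6_edges_def)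
  have t122: "\<not> R 5 9 \<or> \<not> R 9 2 \<or> R 5 2" using tri[of 5 9 2] by (auto simp add: T6_E_def T6_edges_def)
  have t123: "\<not> R 6 1 \<or> \<not> R 1 2 \<or> R 6 2" using tri[of 6 1 2] by (auto simp add: T6_E_def T6_edges_def)
  have t124: "\<not> R 6 1 \<or> \<not> R 1 3 \<or> R 6 3" using tri[of 6 1 3] by (auto simp add: T6_E_def T6_edges_def)
  have t125: "\<not> R 6 2 \<or> \<not> R 2 1 \<or> R 6 1" using tri[of 6 2 1] by (auto simp add: T6_E_def T6_edges_def)
  have t126: "\<not> R 6 2 \<or> \<not> R 2 3 \<or> R 6 3" using tri[of 6 2 3] by (auto simp add: T6_E_def T6_edges_def)
  have t127: "\<not> R 6 3 \<or> \<not> R 3 1 \<or> R 6 1" using tri[of 6 3 1] by (auto simp add: T6_E_def T6_edges_def)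
  have t128: "\<not> R 6 3 \<or> \<not> R 3 2 \<or> R 6 2" using tri[of 6 3 2] by (auto simp add: T6_E_def T6_edges_def)
  have t129: "\<not> R 7 1 \<or> \<not> R 1 2 \<or> R 7 2" using tri[of 7 1 2] by (auto simp add: T6_E_def T6_edges_def)
  have t130: "\<not> R 7 2 \<or> \<not> R 2 1 \<or> R 7 1" using tri[of 7 2 1] by (auto simp add: T6_E_def T6_edges_def)
  have t131: "\<not> R 8 1 \<or> \<not> R 1 4 \<or> R 8 4" using tri[of 8 1 4] by (auto simp add: T6_E_def T6_edges_def)
  have t132: "\<not> R 8 4 \<or> \<not> R 4 1 \<or> R 8 1" using tri[of 8 4 1] by (auto simp add: T6_E_def T6_edges_def)
  have t133: "\<not> R 9 2 \<or> \<not> R 2 5 \<or> R 9 5" using tri[of 9 2 5] by (auto simp add: T6_E_def T6_edges_def)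
  have t134: "\<not> R 9 5 \<or> \<not> R 5 2 \<or> R 9 2" using tri[of 9 5 2] by (auto simp add: T6_E_def T6_edges_def)
  have t135: "\<not> R 1 2 \<or> \<not> R 2 4 \<or> \<not> R 4 8 \<or> \<not> R 1 8" using four[of 1 2 4 8] by (auto simp add: T6_E_def T6_edges_def)
  have t136: "\<not> R 1 2 \<or> \<not> R 2 9 \<or> \<not> R 9 5 \<or> \<not> R 1 5" using four[of 1 2 9 5] by (auto simp add: T6_E_def T6_edges_def)
  have t137: "\<not> R 1 3 \<or> \<not> R 3 2 \<or> \<not> R 2 7 \<or> \<not> R 1 7" using four[of 1 3 2 7] by (auto simp add: T6_E_def T6_edges_def)
  have t138: "\<not> R 1 3 \<or> \<not> R 3 4 \<or> \<not> R 4 8 \<or> \<not> R 1 8" using four[of 1 3 4 8] by (auto simp add: T6_E_def T6_edges_def)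
  have t139: "\<not> R 1 4 \<or> \<not> R 4 2 \<or> \<not> R 2 6 \<or> \<not> R 1 6" using four[of 1 4 2 6] by (auto simp add: T6_E_def T6_edges_def)
  have t140: "\<not> R 1 4 \<or> \<not> R 4 2 \<or> \<not> R 2 7 \<or> \<not> R 1 7" using four[of 1 4 2 7] by (auto simp add: T6_E_def T6_edges_def)
  have t141: "\<not> R 1 4 \<or> \<not> R 4 3 \<or> \<not> R 3 6 \<or> \<not> R 1 6" using four[of 1 4 3 6] by (auto simp add: T6_E_def T6_edges_def)
  have t142: "\<not> R 1 5 \<or> \<not> R 5 2 \<or> \<not> R 2 6 \<or> \<not> R 1 6" using four[of 1 5 2 6] by (auto simp add: T6_E_def T6_edges_def)
  have t143: "\<not> R 1 5 \<or> \<not> R 5 2 \<or> \<not> R 2 7 \<or> \<not> R 1 7" using four[of 1 5 2 7] by (auto simp add: T6_E_def T6_edges_def)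
  have t144: "\<not> R 1 5 \<or> \<not> R 5 3 \<or> \<not> R 3 6 \<or> \<not> R 1 6" using four[of 1 5 3 6] by (auto simp add: T6_E_def T6_edges_def)
  have t145: "\<not> R 1 5 \<or> \<not> R 5 4 \<or> \<not> R 4 8 \<or> \<not> R 1 8" using four[of 1 5 4 8] by (auto simp add: T6_E_def T6_edges_def)
  have t146: "\<not> R 1 5 \<or> \<not> R 5 9 \<or> \<not> R 9 2 \<or> \<not> R 1 2" using four[of 1 5 9 2] by (auto simp add: T6_E_def T6_edges_def)
  have t147: "\<not> R 1 6 \<or> \<not> R 6 2 \<or> \<not> R 2 4 \<or> \<not> R 1 4" using four[of 1 6 2 4] by (auto simp add: T6_E_def T6_edges_def)
  have t148: "\<not> R 1 6 \<or> \<not> R 6 2 \<or> \<not> R 2 5 \<or> \<not> R 1 5" using four[of 1 6 2 5] by (auto simp add: T6_E_def T6_edges_def)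
  have t149: "\<not> R 1 6 \<or> \<not> R 6 2 \<or> \<not> R 2 7 \<or> \<not> R 1 7" using four[of 1 6 2 7] by (auto simp add: T6_E_def T6_edges_def)
  have t150: "\<not> R 1 6 \<or> \<not> R 6 3 \<or> \<not> R 3 4 \<or> \<not> R 1 4" using four[of 1 6 3 4] by (auto simp add: T6_E_def T6_edges_def)
  have t151: "\<not> R 1 6 \<or> \<not> R 6 3 \<or> \<not> R 3 5 \<or> \<not> R 1 5" using four[of 1 6 3 5] by (auto simp add: T6_E_def T6_edges_def)
  have t152: "\<not> R 1 7 \<or> \<not> R 7 2 \<or> \<not> R 2 3 \<or> \<not> R 1 3" using four[of 1 7 2 3] by (auto simp add: T6_E_def T6_edges_def)
  have t153: "\<not> R 1 7 \<or> \<not> R 7 2 \<or> \<not> R 2 4 \<or> \<not> R 1 4" using four[of 1 7 2 4] by (auto simp add: T6_E_def T6_edges_def)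
  have t154: "\<not> R 1 7 \<or> \<not> R 7 2 \<or> \<not> R 2 5 \<or> \<not> R 1 5" using four[of 1 7 2 5] by (auto simp add: T6_E_def T6_edges_def)
  have t155: "\<not> R 1 7 \<or> \<not> R 7 2 \<or> \<not> R 2 6 \<or> \<not> R 1 6" using four[of 1 7 2 6] by (auto simp add: T6_E_def T6_edges_def)
  have t156: "\<not> R 1 8 \<or> \<not> R 8 4 \<or> \<not> R 4 2 \<or> \<not> R 1 2" using four[of 1 8 4 2] by (auto simp add: T6_E_def T6_edges_def)
  have t157: "\<not> R 1 8 \<or> \<not> R 8 4 \<or> \<not> R 4 3 \<or> \<not> R 1 3" using four[of 1 8 4 3] by (auto simp add: T6_E_def T6_edges_def)
  have t158: "\<not> R 1 8 \<or> \<not> R 8 4 \<or> \<not> R 4 5 \<or> \<not> R 1 5" using four[of 1 8 4 5] by (auto simp add: T6_E_def T6_edges_def)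
  have t159: "\<not> R 2 1 \<or> \<not> R 1 5 \<or> \<not> R 5 9 \<or> \<not> R 2 9" using four[of 2 1 5 9] by (auto simp add: T6_E_def T6_edges_def)
  have t160: "\<not> R 2 1 \<or> \<not> R 1 8 \<or> \<not> R 8 4 \<or> \<not> R 2 4" using four[of 2 1 8 4] by (auto simp add: T6_E_def T6_edges_def)
  have t161: "\<not> R 2 3 \<or> \<not> R 3 1 \<or> \<not> R 1 7 \<or> \<not> R 2 7" using four[of 2 3 1 7] by (auto simp add: T6_E_def T6_edges_def)
  have t162: "\<not> R 2 3 \<or> \<not> R 3 5 \<or> \<not> R 5 9 \<or> \<not> R 2 9" using four[of 2 3 5 9] by (auto simp add: T6_E_def T6_edges_def)
  have t163: "\<not> R 2 4 \<or> \<not> R 4 1 \<or> \<not> R 1 6 \<or> \<not> R 2 6" using four[of 2 4 1 6] by (auto simp add: T6_E_def T6_edges_def)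
  have t164: "\<not> R 2 4 \<or> \<not> R 4 1 \<or> \<not> R 1 7 \<or> \<not> R 2 7" using four[of 2 4 1 7] by (auto simp add: T6_E_def T6_edges_def)
  have t165: "\<not> R 2 4 \<or> \<not> R 4 3 \<or> \<not> R 3 6 \<or> \<not> R 2 6" using four[of 2 4 3 6] by (auto simp add: T6_E_def T6_edges_def)
  have t166: "\<not> R 2 4 \<or> \<not> R 4 5 \<or> \<not> R 5 9 \<or> \<not> R 2 9" using four[of 2 4 5 9] by (auto simp add: T6_E_def T6_edges_def)
  have t167: "\<not> R 2 4 \<or> \<not> R 4 8 \<or> \<not> R 8 1 \<or> \<not> R 2 1" using four[of 2 4 8 1] by (auto simp add: T6_E_def T6_edges_def)
  have t168: "\<not> R 2 5 \<or> \<not> R 5 1 \<or> \<not> R 1 6 \<or> \<not> R 2 6" using four[of 2 5 1 6] by (auto simp add: T6_E_def T6_edges_def)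
  have t169: "\<not> R 2 5 \<or> \<not> R 5 1 \<or> \<not> R 1 7 \<or> \<not> R 2 7" using four[of 2 5 1 7] by (auto simp add: T6_E_def T6_edges_def)
  have t170: "\<not> R 2 5 \<or> \<not> R 5 3 \<or> \<not> R 3 6 \<or> \<not> R 2 6" using four[of 2 5 3 6] by (auto simp add: T6_E_def T6_edges_def)
  have t171: "\<not> R 2 6 \<or> \<not> R 6 1 \<or> \<not> R 1 4 \<or> \<not> R 2 4" using four[of 2 6 1 4] by (auto simp add: T6_E_def T6_edges_def)
  have t172: "\<not> R 2 6 \<or> \<not> R 6 1 \<or> \<not> R 1 5 \<or> \<not> R 2 5" using four[of 2 6 1 5] by (auto simp add: T6_E_def T6_edges_def)
  have t173: "\<not> R 2 6 \<or> \<not> R 6 1 \<or> \<not> R 1 7 \<or> \<not> R 2 7" using four[of 2 6 1 7] by (auto simp add: T6_E_def T6_edges_def)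
  have t174: "\<not> R 2 6 \<or> \<not> R 6 3 \<or> \<not> R 3 4 \<or> \<not> R 2 4" using four[of 2 6 3 4] by (auto simp add: T6_E_def T6_edges_def)
  have t175: "\<not> R 2 6 \<or> \<not> R 6 3 \<or> \<not> R 3 5 \<or> \<not> R 2 5" using four[of 2 6 3 5] by (auto simp add: T6_E_def T6_edges_def)
  have t176: "\<not> R 2 7 \<or> \<not> R 7 1 \<or> \<not> R 1 3 \<or> \<not> R 2 3" using four[of 2 7 1 3] by (auto simp add: T6_E_def T6_edges_def)
  have t177: "\<not> R 2 7 \<or> \<not> R 7 1 \<or> \<not> R 1 4 \<or> \<not> R 2 4" using four[of 2 7 1 4] by (auto simp add: T6_E_def T6_edges_def)
  have t178: "\<not> R 2 7 \<or> \<not> R 7 1 \<or> \<not> R 1 5 \<or> \<not> R 2 5" using four[of 2 7 1 5] by (auto simp add: T6_E_def T6_edges_def)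
  have t179: "\<not> R 2 7 \<or> \<not> R 7 1 \<or> \<not> R 1 6 \<or> \<not> R 2 6" using four[of 2 7 1 6] by (auto simp add: T6_E_def T6_edges_def)
  have t180: "\<not> R 2 9 \<or> \<not> R 9 5 \<or> \<not> R 5 1 \<or> \<not> R 2 1" using four[of 2 9 5 1] by (auto simp add: T6_E_def T6_edges_def)
  have t181: "\<not> R 2 9 \<or> \<not> R 9 5 \<or> \<not> R 5 3 \<or> \<not> R 2 3" using four[of 2 9 5 3] by (auto simp add: T6_E_def T6_edges_def)
  have t182: "\<not> R 2 9 \<or> \<not> R 9 5 \<or> \<not> R 5 4 \<or> \<not> R 2 4" using four[of 2 9 5 4] by (auto simp add: T6_E_def T6_edges_def)
  have t183: "\<not> R 3 1 \<or> \<not> R 1 7 \<or> \<not> R 7 2 \<or> \<not> R 3 2" using four[of 3 1 7 2] by (auto simp add: T6_E_def T6_edges_def)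
  have t184: "\<not> R 3 1 \<or> \<not> R 1 8 \<or> \<not> R 8 4 \<or> \<not> R 3 4" using four[of 3 1 8 4] by (auto simp add: T6_E_def T6_edges_def)
  have t185: "\<not> R 3 2 \<or> \<not> R 2 7 \<or> \<not> R 7 1 \<or> \<not> R 3 1" using four[of 3 2 7 1] by (auto simp add: T6_E_def T6_edges_def)
  have t186: "\<not> R 3 2 \<or> \<not> R 2 9 \<or> \<not> R 9 5 \<or> \<not> R 3 5" using four[of 3 2 9 5] by (auto simp add: T6_E_def T6_edges_def)
  have t187: "\<not> R 3 4 \<or> \<not> R 4 1 \<or> \<not> R 1 6 \<or> \<not> R 3 6" using four[of 3 4 1 6] by (auto simp add: T6_E_def T6_edges_def)
  have t188: "\<not> R 3 4 \<or> \<not> R 4 2 \<or> \<not> R 2 6 \<or> \<not> R 3 6" using four[of 3 4 2 6] by (auto simp add: T6_E_def T6_edges_def)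
  have t189: "\<not> R 3 4 \<or> \<not> R 4 8 \<or> \<not> R 8 1 \<or> \<not> R 3 1" using four[of 3 4 8 1] by (auto simp add: T6_E_def T6_edges_def)
  have t190: "\<not> R 3 5 \<or> \<not> R 5 1 \<or> \<not> R 1 6 \<or> \<not> R 3 6" using four[of 3 5 1 6] by (auto simp add: T6_E_def T6_edges_def)
  have t191: "\<not> R 3 5 \<or> \<not> R 5 2 \<or> \<not> R 2 6 \<or> \<not> R 3 6" using four[of 3 5 2 6] by (auto simp add: T6_E_def T6_edges_def)
  have t192: "\<not> R 3 5 \<or> \<not> R 5 9 \<or> \<not> R 9 2 \<or> \<not> R 3 2" using four[of 3 5 9 2] by (auto simp add: T6_E_def T6_edges_def)
  have t193: "\<not> R 3 6 \<or> \<not> R 6 1 \<or> \<not> R 1 4 \<or> \<not> R 3 4" using four[of 3 6 1 4] by (auto simp add: T6_E_def T6_edges_def)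
  have t194: "\<not> R 3 6 \<or> \<not> R 6 1 \<or> \<not> R 1 5 \<or> \<not> R 3 5" using four[of 3 6 1 5] by (auto simp add: T6_E_def T6_edges_def)
  have t195: "\<not> R 3 6 \<or> \<not> R 6 2 \<or> \<not> R 2 4 \<or> \<not> R 3 4" using four[of 3 6 2 4] by (auto simp add: T6_E_def T6_edges_def)
  have t196: "\<not> R 3 6 \<or> \<not> R 6 2 \<or> \<not> R 2 5 \<or> \<not> R 3 5" using four[of 3 6 2 5] by (auto simp add: T6_E_def T6_edges_def)
  have t197: "\<not> R 4 1 \<or> \<not> R 1 6 \<or> \<not> R 6 2 \<or> \<not> R 4 2" using four[of 4 1 6 2] by (auto simp add: T6_E_def T6_edges_def)
  have t198: "\<not> R 4 1 \<or> \<not> R 1 6 \<or> \<not> R 6 3 \<or> \<not> R 4 3" using four[of 4 1 6 3] by (auto simp add: T6_E_def T6_edges_def)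
  have t199: "\<not> R 4 1 \<or> \<not> R 1 7 \<or> \<not> R 7 2 \<or> \<not> R 4 2" using four[of 4 1 7 2] by (auto simp add: T6_E_def T6_edges_def)
  have t200: "\<not> R 4 2 \<or> \<not> R 2 1 \<or> \<not> R 1 8 \<or> \<not> R 4 8" using four[of 4 2 1 8] by (auto simp add: T6_E_def T6_edges_def)
  have t201: "\<not> R 4 2 \<or> \<not> R 2 6 \<or> \<not> R 6 1 \<or> \<not> R 4 1" using four[of 4 2 6 1] by (auto simp add: T6_E_def T6_edges_def)
  have t202: "\<not> R 4 2 \<or> \<not> R 2 6 \<or> \<not> R 6 3 \<or> \<not> R 4 3" using four[of 4 2 6 3] by (auto simp add: T6_E_def T6_edges_def)
  have t203: "\<not> R 4 2 \<or> \<not> R 2 7 \<or> \<not> R 7 1 \<or> \<not> R 4 1" using four[of 4 2 7 1] by (auto simp add: T6_E_def T6_edges_def)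
  have t204: "\<not> R 4 2 \<or> \<not> R 2 9 \<or> \<not> R 9 5 \<or> \<not> R 4 5" using four[of 4 2 9 5] by (auto simp add: T6_E_def T6_edges_def)
  have t205: "\<not> R 4 3 \<or> \<not> R 3 1 \<or> \<not> R 1 8 \<or> \<not> R 4 8" using four[of 4 3 1 8] by (auto simp add: T6_E_def T6_edges_def)
  have t206: "\<not> R 4 3 \<or> \<not> R 3 6 \<or> \<not> R 6 1 \<or> \<not> R 4 1" using four[of 4 3 6 1] by (auto simp add: T6_E_def T6_edges_def)
  have t207: "\<not> R 4 3 \<or> \<not> R 3 6 \<or> \<not> R 6 2 \<or> \<not> R 4 2" using four[of 4 3 6 2] by (auto simp add: T6_E_def T6_edges_def)
  have t208: "\<not> R 4 5 \<or> \<not> R 5 1 \<or> \<not> R 1 8 \<or> \<not> R 4 8" using four[of 4 5 1 8] by (auto simp add: T6_E_def T6_edges_def)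
  have t209: "\<not> R 4 5 \<or> \<not> R 5 9 \<or> \<not> R 9 2 \<or> \<not> R 4 2" using four[of 4 5 9 2] by (auto simp add: T6_E_def T6_edges_def)
  have t210: "\<not> R 4 8 \<or> \<not> R 8 1 \<or> \<not> R 1 2 \<or> \<not> R 4 2" using four[of 4 8 1 2] by (auto simp add: T6_E_def T6_edges_def)
  have t211: "\<not> R 4 8 \<or> \<not> R 8 1 \<or> \<not> R 1 3 \<or> \<not> R 4 3" using four[of 4 8 1 3] by (auto simp add: T6_E_def T6_edges_def)
  have t212: "\<not> R 4 8 \<or> \<not> R 8 1 \<or> \<not> R 1 5 \<or> \<not> R 4 5" using four[of 4 8 1 5] by (auto simp add: T6_E_def T6_edges_def)
  have t213: "\<not> R 5 1 \<or> \<not> R 1 2 \<or> \<not> R 2 9 \<or> \<not> R 5 9" using four[of 5 1 2 9] by (auto simp add: T6_E_def T6_edges_def)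
  have t214: "\<not> R 5 1 \<or> \<not> R 1 6 \<or> \<not> R 6 2 \<or> \<not> R 5 2" using four[of 5 1 6 2] by (auto simp add: T6_E_def T6_edges_def)
  have t215: "\<not> R 5 1 \<or> \<not> R 1 6 \<or> \<not> R 6 3 \<or> \<not> R 5 3" using four[of 5 1 6 3] by (auto simp add: T6_E_def T6_edges_def)
  have t216: "\<not> R 5 1 \<or> \<not> R 1 7 \<or> \<not> R 7 2 \<or> \<not> R 5 2" using four[of 5 1 7 2] by (auto simp add: T6_E_def T6_edges_def)
  have t217: "\<not> R 5 1 \<or> \<not> R 1 8 \<or> \<not> R 8 4 \<or> \<not> R 5 4" using four[of 5 1 8 4] by (auto simp add: T6_E_def T6_edges_def)
  have t218: "\<not> R 5 2 \<or> \<not> R 2 6 \<or> \<not> R 6 1 \<or> \<not> R 5 1" using four[of 5 2 6 1] by (auto simp add: T6_E_def T6_edges_def)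
  have t219: "\<not> R 5 2 \<or> \<not> R 2 6 \<or> \<not> R 6 3 \<or> \<not> R 5 3" using four[of 5 2 6 3] by (auto simp add: T6_E_def T6_edges_def)
  have t220: "\<not> R 5 2 \<or> \<not> R 2 7 \<or> \<not> R 7 1 \<or> \<not> R 5 1" using four[of 5 2 7 1] by (auto simp add: T6_E_def T6_edges_def)
  have t221: "\<not> R 5 3 \<or> \<not> R 3 2 \<or> \<not> R 2 9 \<or> \<not> R 5 9" using four[of 5 3 2 9] by (auto simp add: T6_E_def T6_edges_def)
  have t222: "\<not> R 5 3 \<or> \<not> R 3 6 \<or> \<not> R 6 1 \<or> \<not> R 5 1" using four[of 5 3 6 1] by (auto simp add: T6_E_def T6_edges_def)
  have t223: "\<not> R 5 3 \<or> \<not> R 3 6 \<or> \<not> R 6 2 \<or> \<not> R 5 2" using four[of 5 3 6 2] by (auto simp add: T6_E_def T6_edges_def)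
  have t224: "\<not> R 5 4 \<or> \<not> R 4 2 \<or> \<not> R 2 9 \<or> \<not> R 5 9" using four[of 5 4 2 9] by (auto simp add: T6_E_def T6_edges_def)
  have t225: "\<not> R 5 4 \<or> \<not> R 4 8 \<or> \<not> R 8 1 \<or> \<not> R 5 1" using four[of 5 4 8 1] by (auto simp add: T6_E_def T6_edges_def)
  have t226: "\<not> R 5 9 \<or> \<not> R 9 2 \<or> \<not> R 2 1 \<or> \<not> R 5 1" using four[of 5 9 2 1] by (auto simp add: T6_E_def T6_edges_def)
  have t227: "\<not> R 5 9 \<or> \<not> R 9 2 \<or> \<not> R 2 3 \<or> \<not> R 5 3" using four[of 5 9 2 3] by (auto simp add: T6_E_def T6_edges_def)
  have t228: "\<not> R 5 9 \<or> \<not> R 9 2 \<or> \<not> R 2 4 \<or> \<not> R 5 4" using four[of 5 9 2 4] by (auto simp add: T6_E_def T6_edges_def)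
  have t229: "\<not> R 6 1 \<or> \<not> R 1 4 \<or> \<not> R 4 2 \<or> \<not> R 6 2" using four[of 6 1 4 2] by (auto simp add: T6_E_def T6_edges_def)
  have t230: "\<not> R 6 1 \<or> \<not> R 1 4 \<or> \<not> R 4 3 \<or> \<not> R 6 3" using four[of 6 1 4 3] by (auto simp add: T6_E_def T6_edges_def)
  have t231: "\<not> R 6 1 \<or> \<not> R 1 5 \<or> \<not> R 5 2 \<or> \<not> R 6 2" using four[of 6 1 5 2] by (auto simp add: T6_E_def T6_edges_def)
  have t232: "\<not> R 6 1 \<or> \<not> R 1 5 \<or> \<not> R 5 3 \<or> \<not> R 6 3" using four[of 6 1 5 3] by (auto simp add: T6_E_def T6_edges_def)
  have t233: "\<not> R 6 1 \<or> \<not> R 1 7 \<or> \<not> R 7 2 \<or> \<not> R 6 2" using four[of 6 1 7 2] by (auto simp add: T6_E_def T6_edges_def)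
  have t234: "\<not> R 6 2 \<or> \<not> R 2 4 \<or> \<not> R 4 1 \<or> \<not> R 6 1" using four[of 6 2 4 1] by (auto simp add: T6_E_def T6_edges_def)
  have t235: "\<not> R 6 2 \<or> \<not> R 2 4 \<or> \<not> R 4 3 \<or> \<not> R 6 3" using four[of 6 2 4 3] by (auto simp add: T6_E_def T6_edges_def)
  have t236: "\<not> R 6 2 \<or> \<not> R 2 5 \<or> \<not> R 5 1 \<or> \<not> R 6 1" using four[of 6 2 5 1] by (auto simp add: T6_E_def T6_edges_def)
  have t237: "\<not> R 6 2 \<or> \<not> R 2 5 \<or> \<not> R 5 3 \<or> \<not> R 6 3" using four[of 6 2 5 3] by (auto simp add: T6_E_def T6_edges_def)
  have t238: "\<not> R 6 2 \<or> \<not> R 2 7 \<or> \<not> R 7 1 \<or> \<not> R 6 1" using four[of 6 2 7 1] by (auto simp add: T6_E_def T6_edges_def)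
  have t239: "\<not> R 6 3 \<or> \<not> R 3 4 \<or> \<not> R 4 1 \<or> \<not> R 6 1" using four[of 6 3 4 1] by (auto simp add: T6_E_def T6_edges_def)
  have t240: "\<not> R 6 3 \<or> \<not> R 3 4 \<or> \<not> R 4 2 \<or> \<not> R 6 2" using four[of 6 3 4 2] by (auto simp add: T6_E_def T6_edges_def)
  have t241: "\<not> R 6 3 \<or> \<not> R 3 5 \<or> \<not> R 5 1 \<or> \<not> R 6 1" using four[of 6 3 5 1] by (auto simp add: T6_E_def T6_edges_def)
  have t242: "\<not> R 6 3 \<or> \<not> R 3 5 \<or> \<not> R 5 2 \<or> \<not> R 6 2" using four[of 6 3 5 2] by (auto simp add: T6_E_def T6_edges_def)
  have t243: "\<not> R 7 1 \<or> \<not> R 1 3 \<or> \<not> R 3 2 \<or> \<not> R 7 2" using four[of 7 1 3 2] by (auto simp add: T6_E_def T6_edges_def)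
  have t244: "\<not> R 7 1 \<or> \<not> R 1 4 \<or> \<not> R 4 2 \<or> \<not> R 7 2" using four[of 7 1 4 2] by (auto simp add: T6_E_def T6_edges_def)
  have t245: "\<not> R 7 1 \<or> \<not> R 1 5 \<or> \<not> R 5 2 \<or> \<not> R 7 2" using four[of 7 1 5 2] by (auto simp add: T6_E_def T6_edges_def)
  have t246: "\<not> R 7 1 \<or> \<not> R 1 6 \<or> \<not> R 6 2 \<or> \<not> R 7 2" using four[of 7 1 6 2] by (auto simp add: T6_E_def T6_edges_def)
  have t247: "\<not> R 7 2 \<or> \<not> R 2 3 \<or> \<not> R 3 1 \<or> \<not> R 7 1" using four[of 7 2 3 1] by (auto simp add: T6_E_def T6_edges_def)
  have t248: "\<not> R 7 2 \<or> \<not> R 2 4 \<or> \<not> R 4 1 \<or> \<not> R 7 1" using four[of 7 2 4 1] by (auto simp add: T6_E_def T6_edges_def)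
  have t249: "\<not> R 7 2 \<or> \<not> R 2 5 \<or> \<not> R 5 1 \<or> \<not> R 7 1" using four[of 7 2 5 1] by (auto simp add: T6_E_def T6_edges_def)
  have t250: "\<not> R 7 2 \<or> \<not> R 2 6 \<or> \<not> R 6 1 \<or> \<not> R 7 1" using four[of 7 2 6 1] by (auto simp add: T6_E_def T6_edges_def)
  have t251: "\<not> R 8 1 \<or> \<not> R 1 2 \<or> \<not> R 2 4 \<or> \<not> R 8 4" using four[of 8 1 2 4] by (auto simp add: T6_E_def T6_edges_def)
  have t252: "\<not> R 8 1 \<or> \<not> R 1 3 \<or> \<not> R 3 4 \<or> \<not> R 8 4" using four[of 8 1 3 4] by (auto simp add: T6_E_def T6_edges_def)
  have t253: "\<not> R 8 1 \<or> \<not> R 1 5 \<or> \<not> R 5 4 \<or> \<not> R 8 4" using four[of 8 1 5 4] by (auto simp add: T6_E_def T6_edges_def)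
  have t254: "\<not> R 8 4 \<or> \<not> R 4 2 \<or> \<not> R 2 1 \<or> \<not> R 8 1" using four[of 8 4 2 1] by (auto simp add: T6_E_def T6_edges_def)
  have t255: "\<not> R 8 4 \<or> \<not> R 4 3 \<or> \<not> R 3 1 \<or> \<not> R 8 1" using four[of 8 4 3 1] by (auto simp add: T6_E_def T6_edges_def)
  have t256: "\<not> R 8 4 \<or> \<not> R 4 5 \<or> \<not> R 5 1 \<or> \<not> R 8 1" using four[of 8 4 5 1] by (auto simp add: T6_E_def T6_edges_def)
  have t257: "\<not> R 9 2 \<or> \<not> R 2 1 \<or> \<not> R 1 5 \<or> \<not> R 9 5" using four[of 9 2 1 5] by (auto simp add: T6_E_def T6_edges_def)
  have t258: "\<not> R 9 2 \<or> \<not> R 2 3 \<or> \<not> R 3 5 \<or> \<not> R 9 5" using four[of 9 2 3 5] by (auto simp add: T6_E_def T6_edges_def)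
  have t259: "\<not> R 9 2 \<or> \<not> R 2 4 \<or> \<not> R 4 5 \<or> \<not> R 9 5" using four[of 9 2 4 5] by (auto simp add: T6_E_def T6_edges_def)
  have t260: "\<not> R 9 5 \<or> \<not> R 5 1 \<or> \<not> R 1 2 \<or> \<not> R 9 2" using four[of 9 5 1 2] by (auto simp add: T6_E_def T6_edges_def)
  have t261: "\<not> R 9 5 \<or> \<not> R 5 3 \<or> \<not> R 3 2 \<or> \<not> R 9 2" using four[of 9 5 3 2] by (auto simp add: T6_E_def T6_edges_def)
  have t262: "\<not> R 9 5 \<or> \<not> R 5 4 \<or> \<not> R 4 2 \<or> \<not> R 9 2" using four[of 9 5 4 2] by (auto simp add: T6_E_def T6_edges_def)
  show False using t1 t2 t3 t4 t5 t6 t7 t8 t9 t10 t11 t12 t13 t14 t15 t16 t17 t18 t19 t20 t21 t22 t23 t24 t25 t26 t27 t28 t29 t30 t31 t32 t33 t34 t35 t36 t37 t38 t39 t40 t41 t42 t43 t44 t45 t46 t47 t48 t49 t50 t51 t52 t53 t54 t55 t56 t57 t58 t59 t60 t61 t62 t63 t64 t65 t66 t67 t68 t69 t70 t71 t72 t73 t74 t75 t76 t77 t78 t79 t80 t81 t82 t83 t84 t85 t86 t87 t88 t89 t90 t91 t92 t93 t94 t95 t96 t97 t98 t99 t100 t101 t102 t103 t104 t105 t106 t107 t108 t109 t110 t111 t112 t113 t114 t115 t116 t117 t118 t119 t120 t121 t122 t123 t124 t125 t126 t127 t128 t129 t130 t131 t132 t133 t134 t135 t136 t137 t138 t139 t140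 t141 t142 t143 t144 t145 t146 t147 t148 t149 t150 t151 t152 t153 t154 t155 t156 t157 t158 t159 t160 t161 t162 t163 t164 t165 t166 t167 t168 t169 t170 t171 t172 t173 t174 t175 t176 t177 t178 t179 t180 t181 t182 t183 t184 t185 t186 t187 t188 t189 t190 t191 t192 t193 t194 t195 t196 t197 t198 t199 t200 t201 t202 t203 t204 t205 t206 t207 t208 t209 t210 t211 t212 t213 t214 t215 t216 t217 t218 t219 t220 t221 t222 t223 t224 t225 t226 t227 t228 t229 t230 t231 t232 t233 t234 t235 t236 t237 t238 t239 t240 t241 t242 t243 t244 t245 t246 t247 t248 t249 t250 t251 t252 t253 t254 t255 t256 t257 t258 t259 t260 t261 t262 by sat
qed

lemma T6_E_V: "T6_E x y \<Longrightarrow> x \<in> T6_V \<and> y \<in> T6_V \<and> x \<noteq> y"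
  by (auto simp: T6_E_def T6_edges_def T6_V_def)

lemma nonrep: "\<not> word_representable T6_V T6_E"
proof
  assume "word_representable T6_V T6_E"
  then obtain w where sw: "set w = T6_V"
    and rep: "\<forall>x\<in>T6_V. \<forall>y\<in>T6_V. x \<noteq> y \<longrightarrow> (alternate w x y \<longleftrightarrow> T6_E x y)"
    unfolding word_representable_def by blast
  have altE: "alternate w x y \<longleftrightarrow> PCw x y w \<or> PCw y x w" if "T6_E x y" for x y
    using alt_char[of x y w] T6_E_V[OF that] by blast
  have Ealt: "T6_E x y" if "x \<in> T6_V" "y \<in> T6_V" "x \<noteq> y" "PCw x y w" for x y
    using rep that alt_char[of x y w] by blast
  have anti: "\<not> PCw y x w" if "T6_E x y" "PCw x y w" for x y
    using PCw_anti[of x y w] T6_E_V[OF that(1)] sw that(2) by blast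
  show False
  proof (rule comb[of "\<lambda>x y. PCw x y w"])
    fix x y assume "T6_E x y" then show "PCw x y w \<or> PCw y x w"
      using altE rep T6_E_V by blast
  next
    fix x y assume "T6_E x y" "PCw x y w" then show "\<not> PCw y x w" using anti by blast
  next
    fix a b c assume E: "T6_E a b" "T6_E b c" "T6_E a c" and R: "PCw a b w" "PCw b c w"
    have "PCw a c w \<or> PCw c a w" using E(3) altE rep T6_E_V by blast
    moreover have "\<not> PCw c a w" using PCw_trans3[of a b w c] R anti E(1) by blast
    ultimately show "PCw a c w" by blast
  next
    fix a b c d assume E: "T6_E a b" "T6_E b c" "T6_E c d" "T6_E a d" "a \<noteq> c" "b \<noteq> d"
      and R: "PCw a b w" "PCw b c w" "PCw c d w" "PCw a d w"
    have "PCw a c w" "PCw b d w" using PCw_four[OF R] by auto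
    then show "T6_E a c \<and> T6_E b d" using Ealt E T6_E_V by meson
  qed
qed

lemma rep_word2: "list_all (\<lambda>x. x \<in> set vs) w \<Longrightarrow> list_all (\<lambda>x. x \<in> set w) vs \<Longrightarrow> list_all (\<lambda>x. list_all (\<lambda>y. x = y \<or> (nc (filter (\<lambda>z. z = x \<or> z = y) w) = E x y)) vs) vs
   \<Longrightarrow> word_representable (set vs) E"
  unfolding word_representable_def alt_nc list_all_iff
  by (metis subsetI subset_antisym)
lemma rep_word3: "vs = filter (\<lambda>x. x \<noteq> v) vs0 \<Longrightarrow> list_all (\<lambda>x. x \<in> set vs) w \<Longrightarrow> list_all (\<lambda>x. x \<in> set w) vs \<Longrightarrow> list_all (\<lambda>x. list_all (\<lambda>y. x = y \<or> (nc (filter (\<lambda>z. z = x \<or> z = y) w) = E x y)) vs) vs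
   \<Longrightarrow> word_representable (set vs0 - {v}) E"
  using rep_word2[of vs w E] by (metis set_filter set_minus_filter_out)
lemma T6_V_list: "T6_V = set [1..<10]"
  unfolding T6_V_def set_upt by auto
lemma T6_V_cases: "v \<in> T6_V \<Longrightarrow> v = 1 \<or> v = 2 \<or> v = 3 \<or> v = 4 \<or> v = 5 \<or> v = 6 \<or> v = 7 \<or> v = 8 \<or> v = 9"
  unfolding T6_V_def by auto
lemma rep1: "word_representable (T6_V - {1}) T6_E"
  unfolding T6_V_list
  apply (rule rep_word3[where w="[8, 3, 9, 2, 5, 9, 4, 6, 3, 7, 2, 7, 6, 5, 8, 4]" and vs="[2, 3, 4, 5, 6, 7, 8, 9]"])
  apply (simp add: upt_rec)
  apply simp
  apply simp
  by (simp add: T6_E_def T6_edges_def)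

lemma rep2: "word_representable (T6_V - {2}) T6_E"
  unfolding T6_V_list
  apply (rule rep_word3[where w="[4, 8, 5, 6, 3, 1, 6, 4, 9, 5, 9, 3, 8, 7, 1, 7]" and vs="[1, 3, 4, 5, 6, 7, 8, 9]"])
  apply (simp add: upt_rec)
  apply simp
  apply simp
  by (simp add: T6_E_def T6_edges_def)

lemma rep3: "word_representable (T6_V - {3}) T6_E"
  unfolding T6_V_list
  apply (rule rep_word3[where w="[7, 4, 9, 5, 2, 9, 8, 1, 4, 8, 5, 7, 6, 2, 1, 6]" and vs="[1, 2, 4, 5, 6, 7, 8, 9]"])
  apply (simp add: upt_rec)
  apply simp
  apply simp
  by (simp add: T6_E_def T6_edges_def)

lemma rep4: "word_representable (T6_V - {4}) T6_E"
  unfolding T6_V_list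
  apply (rule rep_word3[where w="[6, 3, 7, 8, 1, 8, 2, 7, 6, 5, 3, 1, 9, 2, 5, 9]" and vs="[1, 2, 3, 5, 6, 7, 8, 9]"])
  apply (simp add: upt_rec)
  apply simp
  apply simp
  by (simp add: T6_E_def T6_edges_def)

lemma rep5: "word_representable (T6_V - {5}) T6_E"
  unfolding T6_V_list
  apply (rule rep_word3[where w="[4, 3, 2, 8, 1, 4, 8, 6, 3, 7, 9, 2, 9, 1, 7, 6]" and vs="[1, 2, 3, 4, 6, 7, 8, 9]"])
  apply (simp add: upt_rec)
  apply simp
  apply simp
  by (simp add: T6_E_def T6_edges_def)

lemma rep6: "word_representable (T6_V - {6}) T6_E"
  unfolding T6_V_list
  apply (rule rep_word3[where w="[9, 3, 4, 7, 1, 2, 7, 5, 3, 8, 4, 1, 8, 9, 2, 5]" and vs="[1, 2, 3, 4, 5, 7, 8, 9]"])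
  apply (simp add: upt_rec)
  apply simp
  apply simp
  by (simp add: T6_E_def T6_edges_def)

lemma rep7: "word_representable (T6_V - {7}) T6_E"
  unfolding T6_V_list
  apply (rule rep_word3[where w="[6, 2, 3, 1, 6, 4, 9, 5, 2, 9, 3, 8, 1, 4, 8, 5]" and vs="[1, 2, 3, 4, 5, 6, 8, 9]"])
  apply (simp add: upt_rec)
  apply simp
  apply simp
  by (simp add: T6_E_def T6_edges_def)

lemma rep8: "word_representable (T6_V - {8}) T6_E"
  unfolding T6_V_list
  apply (rule rep_word3[where w="[5, 2, 9, 1, 3, 4, 5, 6, 7, 2, 1, 7, 3, 6, 4, 9]" and vs="[1, 2, 3, 4, 5, 6, 7, 9]"])
  apply (simp add: upt_rec)
  apply simp
  apply simp
  by (simp add: T6_E_def T6_edges_def)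

lemma rep9: "word_representable (T6_V - {9}) T6_E"
  unfolding T6_V_list
  apply (rule rep_word3[where w="[2, 8, 1, 4, 8, 5, 6, 3, 7, 2, 1, 7, 6, 4, 5, 3]" and vs="[1, 2, 3, 4, 5, 6, 7, 8]"])
  apply (simp add: upt_rec)
  apply simp
  apply simp
  by (simp add: T6_E_def T6_edges_def)

lemma reps: "\<forall>v\<in>T6_V. word_representable (T6_V - {v}) T6_E"
  using T6_V_cases rep1 rep2 rep3 rep4 rep5 rep6 rep7 rep8 rep9 by blast


theorem theorem14:
  shows "\<not> word_representable T6_V T6_E \<and>
         (\<forall>v\<in>T6_V. word_representable (T6_V - {v}) T6_E)"
  using nonrep reps by blast

end
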